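(* Let $d>4$ and let $(X_n)_{n\ge1}$ be the simple random walk on the free group $F_d$ (i.e. the $\mu_d$-random walk with $\mu_d$ uniform on the $2d$ generators and their inverses). There exists $j_0$ such that with positive probability, for every $j>j_0$, the number of distinct reduced words of length $j$ that occur as a length-$j$ prefix of the reduced form of some $X_n$ is at most $\log_2 j$.
   Context: A $\mu$-random walk is $X_n=\zeta_1\cdots\zeta_n$ with $\zeta_i$ i.i.d. of law $\mu$; elements of $F_d$ are written as reduced words. *)

theory Defs
  imports "HOL-Probability.Probability"
begin

text \<open>Letters of the free group F_d: a generator index i < d together with a flag
  (False = generator a_i, True = its inverse a_i^{-1}). Elements of F_d are reduced
  words, i.e. lists of letters with no adjacent letter/inverse pair.\<close>

type_synonym letter = "nat \<times> bool"

definition letters :: "nat \<Rightarrow> letter set" where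
  "letters d = {x. fst x < d}"

definition inv_letter :: "letter \<Rightarrow> letter" where
  "inv_letter x = (fst x, \<not> snd x)"

definition mult_letter :: "letter list \<Rightarrow> letter \<Rightarrow> letter list" where
  "mult_letter w x = (if w \<noteq> [] \<and> last w = inv_letter x then butlast w else w @ [x])"

definition reduced_product :: "letter list \<Rightarrow> letter list" where
  "reduced_product zs = foldl mult_letter [] zs"

definition mu :: "nat \<Rightarrow> letter pmf" where
  "mu d = pmf_of_set (letters d)"

definition walk_space :: "nat \<Rightarrow> letter stream measure" where
  "walk_space d = stream_space (measure_pmf (mu d))"

definition X :: "nat \<Rightarrow> letter stream \<Rightarrow> letter list" where
  "X n \<omega> = reduced_product (stake n \<omega>)"

definition prefixes_of_length :: "nat \<Rightarrow> letter stream \<Rightarrow> letter list set" where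
  "prefixes_of_length j \<omega> = {take j (X n \<omega>) | n. n \<ge> 1 \<and> length (X n \<omega>) \<ge> j}"

end

theory Submission
  imports Defs
begin

definition stp :: "nat \<Rightarrow> letter list \<times> nat \<Rightarrow> letter \<Rightarrow> letter list \<times> nat" where
  "stp j s x = (mult_letter (fst s) x,
     if length (fst s) = j \<and> fst s \<noteq> [] \<and> last (fst s) = inv_letter x then Suc (snd s) else snd s)"

definition Phi :: "real \<Rightarrow> nat \<Rightarrow> nat \<Rightarrow> letter list \<times> nat \<Rightarrow> real" where
  "Phi r k j s = (if k \<le> snd s then 1 else r ^ ((k - snd s) + (length (fst s) - j)))"

lemma letters_eq: "letters d = {..<d} \<times> UNIV"
  by (auto simp: letters_def)

lemma card_letters: "card (letters d) = 2 * d" and finite_letters: "finite (letters d)"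
  by (simp_all add: letters_eq card_cartesian_product)

lemma Phi_nonneg: "r > 0 \<Longrightarrow> Phi r k j s \<ge> 0"
  by (simp add: Phi_def)

lemma sum_delta_split:
  assumes "finite L"
  shows "(\<Sum>x\<in>L. (if x = x0 then A else B)) = real (card L) * B + (if x0 \<in> L then A - B else 0)"
proof -
  have "(\<Sum>x\<in>L. (if x = x0 then A else B)) = (\<Sum>x\<in>L. B + (if x = x0 then A - B else 0))"
    by (rule sum.cong) auto
  also have "\<dots> = real (card L) * B + (\<Sum>x\<in>L. (if x = x0 then A - B else 0))"
    by (simp add: sum.distrib)
  also have "(\<Sum>x\<in>L. (if x = x0 then A - B else 0)) = (if x0 \<in> L then A - B else 0)"
    using assms by (simp add: sum.delta)
  finally show ?thesis .
qed

lemma one_step: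
  assumes d: "d \<ge> 1" and j: "j \<ge> 1" and r: "r = 1 / (2 * real d - 1)"
  shows "(\<Sum>x\<in>letters d. Phi r k j (stp j s x)) \<le> 2 * real d * Phi r k j s"
proof -
  obtain w c where s: "s = (w, c)" by (cases s)
  have rpos: "r > 0" using d r by simp
  have dd: "2 * real d - 1 \<ge> 1" using d by simp
  have r1: "r \<le> 1" using dd r by simp
  have rr: "(2 * real d - 1) * r = 1" using d r by simp
  show ?thesis
  proof (cases "k \<le> c")
    case True
    have "\<And>x. Phi r k j (stp j s x) = 1" using True by (auto simp: Phi_def stp_def s)
    then show ?thesis using True by (simp add: card_letters s Phi_def)
  next
    case ck: False
    show ?thesis
    proof (cases "length w < j")
      case True
      have len: "\<And>x. length (mult_letter w x) \<le> Suc (length w)"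
        by (auto simp: mult_letter_def)
      have "Phi r k j (stp j s x) = r ^ (k - c)" for x
      proof -
        have "length (mult_letter w x) \<le> j" using len[of x] True by linarith
        then show ?thesis using True ck by (simp add: Phi_def stp_def s)
      qed
      moreover have "Phi r k j s = r ^ (k - c)" using True ck by (simp add: Phi_def s)
      ultimately show ?thesis by (simp add: card_letters)
    next
      case False
      then have wne: "w \<noteq> []" using j by auto
      define e where "e = (k - c) + (length w - j)"
      have e1: "e \<ge> 1" using ck by (simp add: e_def)
      define x0 where "x0 = inv_letter (last w)"
      have inv2: "\<And>y. inv_letter (inv_letter y) = y" by (simp add: inv_letter_def)
      have eqx: "\<And>x. (last w = inv_letter x) = (x = x0)"
        unfolding x0_def using inv2 by metis
      have tm: "Phi r k j (stp j s x) = (if x = x0 then r ^ (e - 1) else r ^ (e + 1))" for x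
      proof (cases "x = x0")
        case True
        then have lw: "last w = inv_letter x" using eqx by simp
        have lb: "length (butlast w) = length w - 1" by simp
        show ?thesis
        proof (cases "length w = j")
          case True
          have st: "stp j s x = (butlast w, Suc c)" using lw wne True
            by (simp add: stp_def s mult_letter_def)
          have "e = k - c" using True by (simp add: e_def)
          then have "Phi r k j (stp j s x) = r ^ (e - 1)" unfolding st using ck True lb
            by (simp add: Phi_def)
          then show ?thesis using \<open>x = x0\<close> by simp
        next
          case False
          have st: "stp j s x = (butlast w, c)" using lw wne False
            by (simp add: stp_def s mult_letter_def)
          have ex: "(k - c) + (length w - 1 - j) = e - 1" using False \<open>\<not> length w < j\<close> ck
            by (simp add: e_def)
          have "Phi r k j (stp j s x) = r ^ (e - 1)" unfolding st using ck lb ex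
            by (simp add: Phi_def)
          then show ?thesis using \<open>x = x0\<close> by simp
        qed
      next
        case False
        then have lw: "last w \<noteq> inv_letter x" using eqx by simp
        have st: "stp j s x = (w @ [x], c)" using lw wne
          by (simp add: stp_def s mult_letter_def)
        have ex: "(k - c) + (Suc (length w) - j) = e + 1" using \<open>\<not> length w < j\<close> ck
          by (simp add: e_def)
        have "Phi r k j (stp j s x) = r ^ (e + 1)" unfolding st using ck ex
          by (simp add: Phi_def)
        then show ?thesis using False by simp
      qed
      have Phis: "Phi r k j s = r ^ e" using ck by (simp add: Phi_def s e_def)
      have "(\<Sum>x\<in>letters d. Phi r k j (stp j s x))
          = real (2 * d) * r ^ (e + 1) + (if x0 \<in> letters d then r ^ (e - 1) - r ^ (e + 1) else 0)"
        by (simp add: tm sum_delta_split finite_letters card_letters)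
      also have "\<dots> \<le> real (2 * d) * r ^ (e + 1) + (r ^ (e - 1) - r ^ (e + 1))"
      proof -
        have "r ^ (e + 1) \<le> r ^ (e - 1)"
          using rpos r1 by (intro power_decreasing) auto
        then show ?thesis by auto
      qed
      also have "\<dots> = 2 * real d * r ^ e"
      proof -
        have ee: "e = Suc (e - 1)" using e1 by simp
        have "r ^ (e + 1) = r ^ (e - 1) * r * r" and "r ^ e = r ^ (e - 1) * r"
          by (subst ee, simp)+
        define A where "A = r ^ (e - 1)"
        have h: "1 + r = 2 * real d * r" using rr by (simp add: algebra_simps)
        have "real (2 * d) * (A * r * r) + (A - A * r * r) = A * (1 + ((2 * real d - 1) * r) * r)"
          by (simp add: algebra_simps)
        also have "\<dots> = A * (2 * real d * r)" using rr h by simp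
        finally show ?thesis using \<open>r ^ (e + 1) = r ^ (e - 1) * r * r\<close> \<open>r ^ e = r ^ (e - 1) * r\<close>
          by (simp add: A_def algebra_simps)
      qed
      finally show ?thesis using Phis by simp
    qed
  qed
qed



lemma prob_space_walk: "prob_space (walk_space d)"
  unfolding walk_space_def by (rule prob_space.prob_space_stream_space[OF prob_space_measure_pmf])

lemma meas_stake_fun:
  assumes "\<And>x. F x \<in> space N"
  shows "(\<lambda>\<omega>. F (stake n \<omega>)) \<in> measurable (stream_space (measure_pmf (p :: 'a::countable pmf))) N"
proof -
  have st: "stake n \<in> measurable (stream_space (measure_pmf p)) (count_space UNIV)"
  proof -
    have "sets (stream_space (measure_pmf p)) = sets (stream_space (count_space UNIV))"
      by (rule sets_stream_space_cong) simp
    then have "stream_space (measure_pmf p) \<rightarrow>\<^sub>M count_space UNIV = stream_space (count_space UNIV) \<rightarrow>\<^sub>M count_space UNIV"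
      by (rule measurable_cong_sets) simp
    then show ?thesis using measurable_stake[of n] by simp
  qed
  have "F \<in> measurable (count_space UNIV) N" using assms by auto
  from measurable_compose[OF st this] show ?thesis by (simp add: comp_def)
qed

lemma meas_stake_walk:
  assumes "\<And>x. F x \<in> space N"
  shows "(\<lambda>\<omega>. F (stake n \<omega>)) \<in> measurable (walk_space d) N"
  unfolding walk_space_def by (rule meas_stake_fun[OF assms])

lemma integral_bound:
  assumes d: "d \<ge> 1" and j: "j \<ge> 1" and r: "r = 1 / (2 * real d - 1)"
  shows "(\<integral>\<^sup>+\<omega>. ennreal (Phi r k j (foldl (stp j) s (stake N \<omega>))) \<partial>walk_space d) \<le> ennreal (Phi r k j s)"
proof (induction N arbitrary: s)
  case 0
  interpret prob_space "walk_space d" by (rule prob_space_walk)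
  show ?case by (simp add: emeasure_space_1)
next
  case (Suc N)
  have rpos: "r > 0" using d r by simp
  have "(0,False) \<in> letters d" using d by (simp add: letters_def)
  then have ne: "letters d \<noteq> {}" by auto
  have meas: "(\<lambda>\<omega>. ennreal (Phi r k j (foldl (stp j) s (stake (Suc N) \<omega>))))
      \<in> borel_measurable (stream_space (measure_pmf (mu d)))"
    by (rule meas_stake_fun) simp
  have "(\<integral>\<^sup>+\<omega>. ennreal (Phi r k j (foldl (stp j) s (stake (Suc N) \<omega>))) \<partial>walk_space d)
      = (\<integral>\<^sup>+x. (\<integral>\<^sup>+X. ennreal (Phi r k j (foldl (stp j) (stp j s x) (stake N X))) \<partial>walk_space d) \<partial>measure_pmf (mu d))"
    unfolding walk_space_def
    by (subst prob_space.nn_integral_stream_space[OF prob_space_measure_pmf meas]) simp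
  also have "\<dots> \<le> (\<integral>\<^sup>+x. ennreal (Phi r k j (stp j s x)) \<partial>measure_pmf (mu d))"
    by (intro nn_integral_mono Suc.IH)
  also have "\<dots> = (\<Sum>x\<in>letters d. ennreal (Phi r k j (stp j s x))) / of_nat (card (letters d))"
    unfolding mu_def by (rule nn_integral_pmf_of_set[OF ne finite_letters])
  also have "\<dots> = ennreal ((\<Sum>x\<in>letters d. Phi r k j (stp j s x)) / real (2 * d))"
    using rpos d
    by (simp add: Phi_nonneg sum_nonneg card_letters ennreal_of_nat_eq_real_of_nat divide_ennreal)
  also have "\<dots> \<le> ennreal (Phi r k j s)"
  proof (rule ennreal_leI)
    have "(\<Sum>x\<in>letters d. Phi r k j (stp j s x)) \<le> 2 * real d * Phi r k j s"
      by (rule one_step[OF d j r])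
    then show "(\<Sum>x\<in>letters d. Phi r k j (stp j s x)) / real (2 * d) \<le> Phi r k j s"
      using d by (simp add: divide_le_eq mult.commute)
  qed
  finally show ?case .
qed



definition st :: "nat \<Rightarrow> nat \<Rightarrow> letter stream \<Rightarrow> letter list \<times> nat" where
  "st j N \<omega> = foldl (stp j) ([], 0) (stake N \<omega>)"

lemma fst_foldl_stp: "fst (foldl (stp j) s zs) = foldl mult_letter (fst s) zs"
  by (induction zs arbitrary: s) (simp_all add: stp_def)

lemma fst_st: "fst (st j N \<omega>) = X N \<omega>"
  by (simp add: st_def X_def reduced_product_def fst_foldl_stp)

lemma st_Suc: "st j (Suc N) \<omega> = stp j (st j N \<omega>) (\<omega> !! N)"
  by (simp add: st_def stake_Suc del: stake.simps)

lemma X_Suc: "X (Suc N) \<omega> = mult_letter (X N \<omega>) (\<omega> !! N)"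
  by (simp add: X_def reduced_product_def stake_Suc del: stake.simps)

lemma X_0: "X 0 \<omega> = []"
  by (simp add: X_def reduced_product_def)

lemma cnt_mono: "snd (st j N \<omega>) \<le> snd (st j (Suc N) \<omega>)"
  by (simp add: st_Suc stp_def)

lemma len_mult: "length (mult_letter w x) = (if w \<noteq> [] \<and> last w = inv_letter x then length w - 1 else Suc (length w))"
  by (simp add: mult_letter_def)

lemma take_mult:
  assumes "j \<le> length w" "j \<le> length (mult_letter w x)"
  shows "take j (mult_letter w x) = take j w"
proof (cases "w \<noteq> [] \<and> last w = inv_letter x")
  case True
  then have "length w > 0" by simp
  moreover have "j \<le> length w - 1" using True assms len_mult[of w x] by auto
  ultimately have "j < length w" by linarith
  then show ?thesis using True by (simp add: mult_letter_def take_butlast)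
next
  case False
  then show ?thesis using assms by (auto simp: mult_letter_def)
qed

definition Pfx :: "nat \<Rightarrow> nat \<Rightarrow> letter stream \<Rightarrow> letter list set" where
  "Pfx j N \<omega> = {take j (X n \<omega>) | n. 1 \<le> n \<and> n \<le> N \<and> j \<le> length (X n \<omega>)}"

lemma Pfx_Suc: "Pfx j (Suc N) \<omega> = Pfx j N \<omega> \<union> (if j \<le> length (X (Suc N) \<omega>) then {take j (X (Suc N) \<omega>)} else {})"
  unfolding Pfx_def by (auto simp: le_Suc_eq)

lemma finite_Pfx: "finite (Pfx j N \<omega>)"
proof -
  have "Pfx j N \<omega> \<subseteq> (\<lambda>n. take j (X n \<omega>)) ` {..N}" unfolding Pfx_def by auto
  then show ?thesis by (rule finite_subset) simp
qed

lemma mono_Pfx: "mono (\<lambda>N. Pfx j N \<omega>)"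
  unfolding mono_def Pfx_def by auto

lemma prefixes_Pfx: "prefixes_of_length j \<omega> = (\<Union>N. Pfx j N \<omega>)"
  unfolding prefixes_of_length_def Pfx_def by auto

lemma invariant:
  assumes j: "j \<ge> 1"
  shows "card (Pfx j N \<omega>) \<le> snd (st j N \<omega>) + (if j \<le> length (X N \<omega>) then 1 else 0)"
proof (induction N)
  case 0
  have "Pfx j 0 \<omega> = {}" unfolding Pfx_def by auto
  then show ?case by simp
next
  case (Suc N)
  define w where "w = X N \<omega>"
  define x where "x = \<omega> !! N"
  have XS: "X (Suc N) \<omega> = mult_letter w x" by (simp add: X_Suc w_def x_def)
  have stS: "st j (Suc N) \<omega> = stp j (st j N \<omega>) x" by (simp add: st_Suc x_def)
  have fs: "fst (st j N \<omega>) = w" by (simp add: fst_st w_def)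
  have cm: "snd (st j N \<omega>) \<le> snd (st j (Suc N) \<omega>)" by (rule cnt_mono)
  show ?case
  proof (cases "j \<le> length w")
    case A: True
    then have N1: "1 \<le> N" using j by (cases N) (auto simp: w_def X_0)
    show ?thesis
    proof (cases "j \<le> length (mult_letter w x)")
      case True
      have "take j w \<in> Pfx j N \<omega>" using A N1 unfolding Pfx_def w_def by auto
      then have "Pfx j (Suc N) \<omega> = Pfx j N \<omega>"
        using take_mult[OF A True] True by (auto simp: Pfx_Suc XS)
      then show ?thesis using Suc.IH cm A True by (simp add: XS w_def[symmetric])
    next
      case False
      then have dn: "w \<noteq> [] \<and> last w = inv_letter x" using A len_mult[of w x] by (auto split: if_splits)
      then have "length w = j" using A False len_mult[of w x] by auto
      then have "snd (st j (Suc N) \<omega>) = Suc (snd (st j N \<omega>))"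
        using dn by (simp add: stS stp_def fs)
      moreover have "Pfx j (Suc N) \<omega> = Pfx j N \<omega>" using False by (simp add: Pfx_Suc XS)
      ultimately show ?thesis using Suc.IH A False by (simp add: XS w_def[symmetric])
    qed
  next
    case B: False
    have "card (Pfx j (Suc N) \<omega>) \<le> card (Pfx j N \<omega>) + (if j \<le> length (mult_letter w x) then 1 else 0)"
      by (auto simp: Pfx_Suc XS finite_Pfx card_insert_if)
    then show ?thesis using Suc.IH B cm by (simp add: XS w_def[symmetric])
  qed
qed

lemma chain_finite_subset:
  assumes "finite S" "S \<subseteq> (\<Union>N. A N)" "mono (A :: nat \<Rightarrow> 'a set)"
  shows "\<exists>N. S \<subseteq> A N"
  using assms(1,2)
proof (induction S rule: finite_induct)
  case empty then show ?case by auto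
next
  case (insert x F)
  then obtain n1 n2 where "x \<in> A n1" "F \<subseteq> A n2" by auto
  then have "insert x F \<subseteq> A (max n1 n2)"
    using monoD[OF assms(3), of n1 "max n1 n2"] monoD[OF assms(3), of n2 "max n1 n2"] by auto
  then show ?case by blast
qed

lemma card_chain_le:
  assumes m: "mono (A :: nat \<Rightarrow> 'a set)" and f: "\<And>N. finite (A N)" and y: "(y::real) \<ge> 0"
  shows "(real (card (\<Union>N. A N)) \<le> y) \<longleftrightarrow> ((\<forall>N. real (card (A N)) \<le> y) \<or> (\<forall>M. \<exists>N. M \<le> card (A N)))"
proof (cases "finite (\<Union>N. A N)")
  case True
  obtain N where N: "(\<Union>N. A N) \<subseteq> A N" using chain_finite_subset[OF True _ m] by blast
  have le: "card (A n) \<le> card (\<Union>N. A N)" for n using True by (intro card_mono) auto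
  have eq: "card (\<Union>N. A N) = card (A N)" using le[of N] N f[of N] card_mono by (metis le_antisym)
  have "\<not> (\<forall>M. \<exists>N. M \<le> card (A N))"
    using le by (metis not_less_eq_eq)
  then show ?thesis using eq le
    by (metis (no_types, opaque_lifting) of_nat_le_iff order_trans)
next
  case False
  have "\<forall>M. \<exists>N. M \<le> card (A N)"
  proof
    fix M
    obtain T where T: "T \<subseteq> (\<Union>N. A N)" "finite T" "card T = M"
      using infinite_arbitrarily_large[OF False] by blast
    obtain N where "T \<subseteq> A N" using chain_finite_subset[OF T(2,1) m] by blast
    then have "M \<le> card (A N)" using T f[of N] card_mono by blast
    then show "\<exists>N. M \<le> card (A N)" by blast
  qed
  then show ?thesis using False y by simp
qed



lemma bad_sub:
  assumes j: "j \<ge> 1" and b: "\<not> real (card (prefixes_of_length j \<omega>)) \<le> log 2 (real j)"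
  shows "\<exists>N. nat \<lfloor>log 2 (real j)\<rfloor> \<le> snd (st j N \<omega>)"
proof -
  have lg: "log 2 (real j) \<ge> 0" using j by simp
  have fin: "finite (prefixes_of_length j \<omega>)"
    using b lg by (metis card.infinite of_nat_0 order.trans order_refl)
  obtain N where N: "prefixes_of_length j \<omega> \<subseteq> Pfx j N \<omega>"
    using chain_finite_subset[OF fin _ mono_Pfx] prefixes_Pfx by blast
  have "card (prefixes_of_length j \<omega>) \<le> card (Pfx j N \<omega>)"
    using N finite_Pfx by (rule card_mono[rotated])
  also have "\<dots> \<le> snd (st j N \<omega>) + 1" using invariant[OF j, of N \<omega>] by (auto split: if_splits)
  finally have c1: "card (prefixes_of_length j \<omega>) \<le> snd (st j N \<omega>) + 1" .
  have "real (nat \<lfloor>log 2 (real j)\<rfloor>) \<le> log 2 (real j)" using lg by linarith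
  then have "real (nat \<lfloor>log 2 (real j)\<rfloor>) < real (card (prefixes_of_length j \<omega>))" using b by linarith
  then have "nat \<lfloor>log 2 (real j)\<rfloor> < card (prefixes_of_length j \<omega>)" by linarith
  then have "nat \<lfloor>log 2 (real j)\<rfloor> \<le> snd (st j N \<omega>)" using c1 by linarith
  then show ?thesis by blast
qed

definition Bset :: "nat \<Rightarrow> nat \<Rightarrow> letter stream set" where
  "Bset d j = {\<omega> \<in> space (walk_space d). \<exists>N. nat \<lfloor>log 2 (real j)\<rfloor> \<le> snd (st j N \<omega>)}"

lemma Aset_sets: "{\<omega> \<in> space (walk_space d). k \<le> snd (st j N \<omega>)} \<in> sets (walk_space d)"
proof -
  have "Measurable.pred (walk_space d) (\<lambda>\<omega>. k \<le> snd (foldl (stp j) ([], 0) (stake N \<omega>)))"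
    by (rule meas_stake_walk) simp
  then show ?thesis unfolding st_def by measurable
qed

lemma Bset_sets: "Bset d j \<in> sets (walk_space d)"
proof -
  have "Bset d j = (\<Union>N. {\<omega> \<in> space (walk_space d). nat \<lfloor>log 2 (real j)\<rfloor> \<le> snd (st j N \<omega>)})"
    unfolding Bset_def by auto
  then show ?thesis using Aset_sets by auto
qed

lemma Bset_bound:
  assumes d: "d \<ge> 1" and j: "j \<ge> 1" and r: "r = 1 / (2 * real d - 1)"
  shows "measure (walk_space d) (Bset d j) \<le> r ^ nat \<lfloor>log 2 (real j)\<rfloor>"
proof -
  interpret P: prob_space "walk_space d" by (rule prob_space_walk)
  define k where "k = nat \<lfloor>log 2 (real j)\<rfloor>"
  define A where "A N = {\<omega> \<in> space (walk_space d). k \<le> snd (st j N \<omega>)}" for N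
  have As: "range A \<subseteq> sets (walk_space d)" using Aset_sets unfolding A_def by auto
  have inc: "incseq A"
    by (rule incseq_SucI) (auto simp: A_def intro: order_trans[OF _ cnt_mono])
  have BU: "Bset d j = (\<Union>N. A N)" unfolding Bset_def A_def k_def by auto
  have rpos: "r > 0" using d r by simp
  have Phi0: "Phi r k j ([], 0) = r ^ k" by (simp add: Phi_def)
  have eA: "emeasure (walk_space d) (A N) \<le> ennreal (r ^ k)" for N
  proof -
    have "emeasure (walk_space d) (A N) = (\<integral>\<^sup>+\<omega>. indicator (A N) \<omega> \<partial>walk_space d)"
      using As by (simp add: nn_integral_indicator image_subset_iff)
    also have "\<dots> \<le> (\<integral>\<^sup>+\<omega>. ennreal (Phi r k j (foldl (stp j) ([], 0) (stake N \<omega>))) \<partial>walk_space d)"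
      by (rule nn_integral_mono) (auto simp: indicator_def A_def st_def Phi_def)
    also have "\<dots> \<le> ennreal (Phi r k j ([], 0))" by (rule integral_bound[OF d j r])
    finally show ?thesis using Phi0 by simp
  qed
  have "emeasure (walk_space d) (Bset d j) = (SUP N. emeasure (walk_space d) (A N))"
    using SUP_emeasure_incseq[OF As inc] BU by simp
  also have "\<dots> \<le> ennreal (r ^ k)" by (rule SUP_least) (rule eA)
  finally have "ennreal (measure (walk_space d) (Bset d j)) \<le> ennreal (r ^ k)"
    using P.emeasure_eq_measure by simp
  then show ?thesis using rpos unfolding k_def by (simp add: ennreal_le_iff)
qed

lemma power_bound:
  assumes d: "d > 4" and j: "j \<ge> 1" and r: "r = 1 / (2 * real d - 1)"
  shows "r ^ nat \<lfloor>log 2 (real j)\<rfloor> \<le> 4 / real j ^ 2"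
proof -
  define k where "k = nat \<lfloor>log 2 (real j)\<rfloor>"
  have lg: "log 2 (real j) \<ge> 0" using j by simp
  have "log 2 (real j) < real (k + 1)" unfolding k_def using lg by linarith
  then have "real j < 2 powr real (k + 1)" using j by (simp add: log_less_iff)
  moreover have "2 powr real (k + 1) = (2::real) ^ (k + 1)" by (rule powr_realpow) simp
  ultimately have jl: "real j < 2 ^ (k + 1)" by simp
  have dd: "2 * real d - 1 \<ge> 4" using d by simp
  have r0: "r > 0" using dd r by simp
  have r4: "r \<le> 1 / 4" using dd r by (simp add: divide_le_eq)
  have "r ^ k \<le> (1 / 4) ^ k" using r0 r4 by (intro power_mono) auto
  moreover have "real j ^ 2 \<le> (2 ^ (k + 1)) ^ 2" using jl j by (intro power_mono) auto
  moreover have "((2::real) ^ (k + 1)) ^ 2 = 4 * 4 ^ k"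
  proof -
    have "((2::real) ^ (k + 1)) ^ 2 = (2 ^ 2) ^ (k + 1)" by (metis power_mult mult.commute)
    then show ?thesis by simp
  qed
  ultimately have "r ^ k * real j ^ 2 \<le> (1 / 4) ^ k * (4 * 4 ^ k)"
    by (intro mult_mono) auto
  also have "\<dots> = 4" by (simp add: power_mult_distrib[symmetric])
  finally show ?thesis unfolding k_def[symmetric] using j by (simp add: field_simps)
qed



definition PfxL :: "nat \<Rightarrow> nat \<Rightarrow> letter list \<Rightarrow> letter list set" where
  "PfxL j N zs = {take j (reduced_product (take n zs)) | n. 1 \<le> n \<and> n \<le> N \<and> j \<le> length (reduced_product (take n zs))}"

lemma Pfx_PfxL: "Pfx j N \<omega> = PfxL j N (stake N \<omega>)"
proof -
  have h: "take n (stake N \<omega>) = stake n \<omega>" if "n \<le> N" for n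
    using that by (simp add: take_stake min_absorb1)
  show ?thesis
  proof (rule set_eqI, rule iffI)
    fix y assume "y \<in> Pfx j N \<omega>"
    then obtain n where n: "y = take j (X n \<omega>)" "1 \<le> n" "n \<le> N" "j \<le> length (X n \<omega>)"
      unfolding Pfx_def by auto
    show "y \<in> PfxL j N (stake N \<omega>)" unfolding PfxL_def
      by (intro CollectI exI[of _ n]) (use n h[of n] in \<open>simp add: X_def\<close>)
  next
    fix y assume "y \<in> PfxL j N (stake N \<omega>)"
    then obtain n where n: "y = take j (reduced_product (take n (stake N \<omega>)))" "1 \<le> n" "n \<le> N"
       "j \<le> length (reduced_product (take n (stake N \<omega>)))"
      unfolding PfxL_def by auto
    show "y \<in> Pfx j N \<omega>" unfolding Pfx_def
      by (intro CollectI exI[of _ n]) (use n h[of n] in \<open>simp add: X_def\<close>)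
  qed
qed

lemma G_sets:
  "{\<omega> \<in> space (walk_space d). \<forall>j > j0. real (card (prefixes_of_length j \<omega>)) \<le> log 2 (real j)}
     \<in> sets (walk_space d)"
proof -
  have eq: "{\<omega> \<in> space (walk_space d). \<forall>j > j0. real (card (prefixes_of_length j \<omega>)) \<le> log 2 (real j)}
     = {\<omega> \<in> space (walk_space d). \<forall>j. j0 < j \<longrightarrow>
          ((\<forall>N. real (card (PfxL j N (stake N \<omega>))) \<le> log 2 (real j)) \<or>
           (\<forall>M. \<exists>N. M \<le> card (PfxL j N (stake N \<omega>))))}"
  proof -
    have "real (card (prefixes_of_length j \<omega>)) \<le> log 2 (real j) \<longleftrightarrow>
          ((\<forall>N. real (card (PfxL j N (stake N \<omega>))) \<le> log 2 (real j)) \<or>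
           (\<forall>M. \<exists>N. M \<le> card (PfxL j N (stake N \<omega>))))" if "j0 < j" for j \<omega>
    proof -
      have "log 2 (real j) \<ge> 0" using that by simp
      from card_chain_le[OF mono_Pfx finite_Pfx this, of j \<omega>] show ?thesis
        by (simp add: prefixes_Pfx Pfx_PfxL)
    qed
    then show ?thesis by auto
  qed
  have [measurable]: "Measurable.pred (walk_space d) (\<lambda>\<omega>. real (card (PfxL j N (stake N \<omega>))) \<le> log 2 (real j))" for j N
    by (rule meas_stake_walk) simp
  have [measurable]: "Measurable.pred (walk_space d) (\<lambda>\<omega>. M \<le> card (PfxL j N (stake N \<omega>)))" for j N M
    by (rule meas_stake_walk) simp
  show ?thesis unfolding eq by measurable
qed

theorem mainTheorem12:
  fixes d :: nat
  assumes "d > 4"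
  shows "\<exists>j0::nat. measure (walk_space d)
            {\<omega> \<in> space (walk_space d).
               \<forall>j > j0. real (card (prefixes_of_length j \<omega>)) \<le> log 2 (real j)} > 0"
proof -
  interpret P: prob_space "walk_space d" by (rule prob_space_walk)
  define r where "r = 1 / (2 * real d - 1)"
  have d1: "d \<ge> 1" using assms by simp
  define f where "f n = 4 * inverse (real n ^ 2)" for n
  have sf: "summable f" unfolding f_def by (intro summable_mult inverse_power_summable) simp
  obtain N0 where N0: "\<forall>n\<ge>N0. norm (\<Sum>i. f (i + n)) < 1" using suminf_exist_split[of 1 f] sf by auto
  define j0 where "j0 = N0"
  define G where "G = {\<omega> \<in> space (walk_space d). \<forall>j > j0. real (card (prefixes_of_length j \<omega>)) \<le> log 2 (real j)}"
  have Gs: "G \<in> sets (walk_space d)" unfolding G_def by (rule G_sets)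
  define C where "C i = Bset d (i + Suc j0)" for i
  have Cs: "range C \<subseteq> sets (walk_space d)" using Bset_sets unfolding C_def by auto
  have sub: "space (walk_space d) - G \<subseteq> (\<Union>i. C i)"
  proof
    fix \<omega> assume w: "\<omega> \<in> space (walk_space d) - G"
    then obtain j where j: "j0 < j" "\<not> real (card (prefixes_of_length j \<omega>)) \<le> log 2 (real j)"
      unfolding G_def by auto
    then obtain N where "nat \<lfloor>log 2 (real j)\<rfloor> \<le> snd (st j N \<omega>)" using bad_sub[of j \<omega>] by auto
    then have "\<omega> \<in> Bset d j" using w unfolding Bset_def by auto
    moreover have "j = (j - Suc j0) + Suc j0" using j by simp
    ultimately have "\<omega> \<in> C (j - Suc j0)" unfolding C_def by metis
    then show "\<omega> \<in> (\<Union>i. C i)" by blast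
  qed
  have Cb: "measure (walk_space d) (C i) \<le> f (i + Suc j0)" for i
  proof -
    have "measure (walk_space d) (C i) \<le> r ^ nat \<lfloor>log 2 (real (i + Suc j0))\<rfloor>"
      unfolding C_def by (rule Bset_bound[OF d1 _ r_def]) simp
    also have "\<dots> \<le> 4 / real (i + Suc j0) ^ 2"
      by (rule power_bound[OF assms _ r_def]) simp
    finally show ?thesis by (simp add: f_def divide_inverse)
  qed
  have sf': "summable (\<lambda>i. f (i + Suc j0))" using sf by (rule summable_ignore_initial_segment)
  have sC: "summable (\<lambda>i. measure (walk_space d) (C i))"
    by (rule summable_comparison_test'[OF sf']) (use Cb in auto)
  have "P.prob (space (walk_space d) - G) \<le> P.prob (\<Union>i. C i)"
    using sub Cs by (intro P.finite_measure_mono) auto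
  also have "\<dots> \<le> (\<Sum>i. P.prob (C i))"
    by (rule P.finite_measure_subadditive_countably[OF Cs sC])
  also have "\<dots> \<le> (\<Sum>i. f (i + Suc j0))"
    by (rule suminf_le[OF Cb sC sf'])
  also have "\<dots> < 1"
  proof -
    have "norm (\<Sum>i. f (i + Suc N0)) < 1" using N0[rule_format, of "Suc N0"] by simp
    then have "norm (\<Sum>i. f (i + Suc j0)) < 1" unfolding j0_def .
    then show ?thesis by simp
  qed
  finally have "P.prob (space (walk_space d) - G) < 1" .
  then have "P.prob G > 0" using P.prob_compl[OF Gs] by simp
  then show ?thesis unfolding G_def by blast
qed

end
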